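(* A category $S$ is conical if and only if its universal monoid $\mathrm{U_{mon}}(S)$ is conical.
   Context: Categories are arrow-only: a set $S$ with a partial associative multiplication, set of identities $\mathrm{Id}\,S$, and each $x$ has source and target identities. $S$ is conical if, whenever $xy$ is defined and belongs to $\mathrm{Id}\,S$, then $x\in\mathrm{Id}\,S$ (equivalently $y\in\mathrm{Id}\,S$); for a monoid this means $xy=1$ implies $x=y=1$. $\mathrm{U_{mon}}(S)$ is the monoid presented by generators $\varepsilon_S(x)$ ($x\in S$) and relations $\varepsilon_S(e)=1$ ($e\in\mathrm{Id}\,S$), $\varepsilon_S(x)\varepsilon_S(y)=\varepsilon_S(xy)$ whenever $xy$ is defined. *)

theory Defs
  imports "HOL-Algebra.Group"
begin

text \<open>Arrow-only categories: a set of arrows with a partial multiplication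
  (x \<cdot> y defined iff the source of x equals the target of y), a set of identities,
  and source/target maps.\<close>

record 'a category =
  arr :: "'a set"
  ids :: "'a set"
  cmp :: "'a \<Rightarrow> 'a \<Rightarrow> 'a option"
  src :: "'a \<Rightarrow> 'a"
  tgt :: "'a \<Rightarrow> 'a"

definition is_category :: "('a, 'b) category_scheme \<Rightarrow> bool" where
  "is_category S \<longleftrightarrow>
     ids S \<subseteq> arr S
   \<and> (\<forall>x y z. cmp S x y = Some z \<longrightarrow> x \<in> arr S \<and> y \<in> arr S \<and> z \<in> arr S)
   \<and> (\<forall>x \<in> arr S. src S x \<in> ids S \<and> tgt S x \<in> ids S)
   \<and> (\<forall>x \<in> arr S. \<forall>y \<in> arr S. cmp S x y \<noteq> None \<longleftrightarrow> src S x = tgt S y)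
   \<and> (\<forall>x y z. cmp S x y = Some z \<longrightarrow> src S z = src S y \<and> tgt S z = tgt S x)
   \<and> (\<forall>x y z xy yz. cmp S x y = Some xy \<longrightarrow> cmp S y z = Some yz \<longrightarrow>
          cmp S xy z = cmp S x yz)
   \<and> (\<forall>e \<in> ids S. src S e = e \<and> tgt S e = e)
   \<and> (\<forall>x \<in> arr S. cmp S x (src S x) = Some x \<and> cmp S (tgt S x) x = Some x)"

definition conical_category :: "('a, 'b) category_scheme \<Rightarrow> bool" where
  "conical_category S \<longleftrightarrow>
     (\<forall>x y z. cmp S x y = Some z \<longrightarrow> z \<in> ids S \<longrightarrow> x \<in> ids S)"

definition conical_monoid :: "('c, 'd) monoid_scheme \<Rightarrow> bool" where
  "conical_monoid M \<longleftrightarrow>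
     (\<forall>x \<in> carrier M. \<forall>y \<in> carrier M. x \<otimes>\<^bsub>M\<^esub> y = \<one>\<^bsub>M\<^esub> \<longrightarrow> x = \<one>\<^bsub>M\<^esub> \<and> y = \<one>\<^bsub>M\<^esub>)"

text \<open>The monoid congruence on words over the arrows (the free monoid on
  generators \<open>\<epsilon>(x)\<close>) generated by the defining relations of U_mon(S).\<close>
inductive umon_eq :: "('a, 'b) category_scheme \<Rightarrow> 'a list \<Rightarrow> 'a list \<Rightarrow> bool"
  for S where
  rel_id: "e \<in> ids S \<Longrightarrow> umon_eq S [e] []"
| rel_mult: "cmp S x y = Some z \<Longrightarrow> umon_eq S [x, y] [z]"
| refl: "w \<in> lists (arr S) \<Longrightarrow> umon_eq S w w"
| sym: "umon_eq S u v \<Longrightarrow> umon_eq S v u"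
| trans: "umon_eq S u v \<Longrightarrow> umon_eq S v w \<Longrightarrow> umon_eq S u w"
| ctxt: "umon_eq S u v \<Longrightarrow> p \<in> lists (arr S) \<Longrightarrow> q \<in> lists (arr S) \<Longrightarrow>
         umon_eq S (p @ u @ q) (p @ v @ q)"

definition umon_rel :: "('a, 'b) category_scheme \<Rightarrow> ('a list \<times> 'a list) set" where
  "umon_rel S = {(u, v). umon_eq S u v}"

definition U_mon :: "('a, 'b) category_scheme \<Rightarrow> 'a list set monoid" where
  "U_mon S = \<lparr> carrier = lists (arr S) // umon_rel S,
               mult = (\<lambda>A B. \<Union>a \<in> A. \<Union>b \<in> B. umon_rel S `` {a @ b}),
               one = umon_rel S `` {[]} \<rparr>"

end

theory Submission
  imports Defs
begin

context
  fixes S :: "('a, 'b) category_scheme"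
  assumes cat: "is_category S"
begin

lemmas cc0 = cat[unfolded is_category_def]
lemmas cc1 = cc0[THEN conjunct2]
lemmas cc2 = cc1[THEN conjunct2]
lemmas cc3 = cc2[THEN conjunct2]
lemmas cc4 = cc3[THEN conjunct2]
lemmas cc5 = cc4[THEN conjunct2]
lemmas cc6 = cc5[THEN conjunct2]

lemma c_ids: "ids S \<subseteq> arr S" by (rule cc0[THEN conjunct1])
lemma c_arr: "cmp S x y = Some z \<Longrightarrow> x \<in> arr S \<and> y \<in> arr S \<and> z \<in> arr S"
  by (rule cc1[THEN conjunct1, rule_format])
lemma c_st: "x \<in> arr S \<Longrightarrow> src S x \<in> ids S \<and> tgt S x \<in> ids S"
  by (rule cc2[THEN conjunct1, rule_format])
lemma c_def: "x \<in> arr S \<Longrightarrow> y \<in> arr S \<Longrightarrow> cmp S x y \<noteq> None \<longleftrightarrow> src S x = tgt S y"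
  by (rule cc3[THEN conjunct1, rule_format])
lemma c_stc: "cmp S x y = Some z \<Longrightarrow> src S z = src S y \<and> tgt S z = tgt S x"
  by (rule cc4[THEN conjunct1, rule_format])
lemma c_assoc: "cmp S x y = Some xy \<Longrightarrow> cmp S y z = Some yz \<Longrightarrow> cmp S xy z = cmp S x yz"
  by (rule cc5[THEN conjunct1, rule_format])
lemma c_idst: "e \<in> ids S \<Longrightarrow> src S e = e \<and> tgt S e = e"
  by (rule cc6[THEN conjunct1, rule_format])
lemma c_unit: "x \<in> arr S \<Longrightarrow> cmp S x (src S x) = Some x \<and> cmp S (tgt S x) x = Some x"
  by (rule cc6[THEN conjunct2, rule_format])

lemma id_left: "cmp S x y = Some z \<Longrightarrow> x \<in> ids S \<Longrightarrow> z = y"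
proof -
  assume h: "cmp S x y = Some z" "x \<in> ids S"
  then have "x \<in> arr S" "y \<in> arr S" using c_arr by auto
  then have "src S x = tgt S y" using c_def h by auto
  then have "tgt S y = x" using c_idst h by auto
  then show ?thesis using c_unit[OF \<open>y \<in> arr S\<close>] h by auto
qed

lemma id_right: "cmp S x y = Some z \<Longrightarrow> y \<in> ids S \<Longrightarrow> z = x"
proof -
  assume h: "cmp S x y = Some z" "y \<in> ids S"
  then have "x \<in> arr S" "y \<in> arr S" using c_arr by auto
  then have "src S x = tgt S y" using c_def h by auto
  then have "src S x = y" using c_idst h by auto
  then show ?thesis using c_unit[OF \<open>x \<in> arr S\<close>] h by auto
qed

lemma eq_lists: "umon_eq S u v \<Longrightarrow> u \<in> lists (arr S) \<and> v \<in> lists (arr S)"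
  by (induction rule: umon_eq.induct) (use c_ids c_arr in auto)

fun nrm :: "'a list \<Rightarrow> bool" where
  "nrm [] = True"
| "nrm [u] = (u \<in> arr S - ids S)"
| "nrm (u # t # w) = (u \<in> arr S - ids S \<and> cmp S u t = None \<and> nrm (t # w))"

fun act :: "'a \<Rightarrow> 'a list \<Rightarrow> 'a list" where
  "act x [] = (if x \<in> ids S then [] else [x])"
| "act x (u # w) = (if x \<in> ids S then u # w else
     (case cmp S x u of None \<Rightarrow> x # u # w
        | Some z \<Rightarrow> if z \<in> ids S then w else z # w))"

lemma nrm_tl: "nrm (u # w) \<Longrightarrow> nrm w"
  by (cases w) auto

lemma nrm_cons: "nrm (u # w) \<longleftrightarrow> u \<in> arr S - ids S \<and> (case w of [] \<Rightarrow> True | t # _ \<Rightarrow> cmp S u t = None) \<and> nrm w"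
  by (cases w) auto

lemma act_nrm: "x \<in> arr S \<Longrightarrow> nrm w \<Longrightarrow> nrm (act x w)"
proof (cases w)
  case Nil
  assume "x \<in> arr S" then show ?thesis using Nil by auto
next
  case (Cons u w')
  assume x: "x \<in> arr S" and n: "nrm w"
  have u: "u \<in> arr S - ids S" and n': "nrm w'"
    and nc: "case w' of [] \<Rightarrow> True | t # _ \<Rightarrow> cmp S u t = None"
    using n Cons nrm_cons by auto
  show ?thesis
  proof (cases "x \<in> ids S")
    case True then show ?thesis using n Cons by simp
  next
    case xn: False
    show ?thesis
    proof (cases "cmp S x u")
      case None
      then show ?thesis using Cons xn x n by simp
    next
      case (Some z)
      show ?thesis
      proof (cases "z \<in> ids S")
        case True then show ?thesis using Cons xn Some n' by simp
      next
        case False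
        have z: "z \<in> arr S" using c_arr Some by auto
        have "case w' of [] \<Rightarrow> True | t # _ \<Rightarrow> cmp S z t = None"
        proof (cases w')
          case (Cons t w'')
          have t: "t \<in> arr S" using n' Cons nrm_cons by auto
          have "src S u \<noteq> tgt S t" using nc Cons c_def[of u t] u t by auto
          moreover have "src S z = src S u" using c_stc Some by auto
          ultimately show ?thesis using Cons c_def[OF z t] by auto
        qed simp
        then show ?thesis using Cons xn Some False z n' nrm_cons[of z w'] by simp
      qed
    qed
  qed
qed

lemma act_id: "e \<in> ids S \<Longrightarrow> act e w = w"
  by (cases w) auto

lemma act_comp:
  assumes h: "cmp S x y = Some z" and n: "nrm w"
  shows "act x (act y w) = act z w"
proof -
  have x: "x \<in> arr S" and y: "y \<in> arr S" and z: "z \<in> arr S" using c_arr h by auto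
  have sxty: "src S x = tgt S y" using c_def x y h by auto
  show ?thesis
  proof (cases "x \<in> ids S")
    case True then show ?thesis using id_left[OF h] act_id by simp
  next
    case xn: False
    show ?thesis
    proof (cases "y \<in> ids S")
      case True then show ?thesis using id_right[OF h] act_id by simp
    next
      case yn: False
      show ?thesis
      proof (cases w)
        case Nil
        then show ?thesis using xn yn h by simp
      next
        case (Cons u w')
        have u: "u \<in> arr S - ids S" and n': "nrm w'"
          and nc: "case w' of [] \<Rightarrow> True | t # _ \<Rightarrow> cmp S u t = None"
          using n Cons nrm_cons by auto
        have szy: "src S z = src S y" and tzx: "tgt S z = tgt S x" using c_stc h by auto
        show ?thesis
        proof (cases "cmp S y u")
          case None
          moreover have "cmp S y u \<noteq> None \<longleftrightarrow> src S y = tgt S u" using c_def y u by blast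
          ultimately have "src S y \<noteq> tgt S u" by simp
          moreover have "cmp S z u \<noteq> None \<longleftrightarrow> src S z = tgt S u" using c_def z u by blast
          ultimately have zu: "cmp S z u = None" using szy by simp
          show ?thesis using Cons None xn yn h zu act_id by auto
        next
          case (Some v)
          have v: "v \<in> arr S" using c_arr Some by auto
          have svu: "src S v = src S u" and tvy: "tgt S v = tgt S y" using c_stc Some by auto
          obtain r where r: "cmp S x v = Some r"
            using c_def[OF x v] sxty tvy by (cases "cmp S x v") auto
          have zur: "cmp S z u = Some r" using c_assoc[OF h Some] r by simp
          show ?thesis
          proof (cases "v \<in> ids S")
            case vi: True
            have "r = x" using id_right[OF r vi] .
              have "case w' of [] \<Rightarrow> True | t # _ \<Rightarrow> cmp S x t = None"
              proof (cases w')
                case (Cons t w'')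
                have t: "t \<in> arr S" using n' Cons nrm_cons by auto
                have "src S u \<noteq> tgt S t" using nc Cons c_def[of u t] u t by auto
                moreover have "src S x = src S u"
                  using sxty tvy svu c_idst[OF vi] by simp
                ultimately show ?thesis using Cons c_def[OF x t] by auto
              qed simp
              note xw' = this
            show ?thesis
            proof (cases "z \<in> ids S")
              case True
              have "r = u" using id_left[OF zur True] .
              then have "u = x" using \<open>r = x\<close> by simp
              show ?thesis using Cons Some vi True xn yn \<open>u = x\<close> xw' act_id
                by (cases w') auto
            next
              case False
              show ?thesis using Cons Some vi False xn yn zur \<open>r = x\<close> xw'
                by (cases w') auto
            qed
          next
            case vn: False
            show ?thesis
            proof (cases "z \<in> ids S")
              case True
              have "r = u" using id_left[OF zur True] .
              then show ?thesis using Cons Some vn True xn yn r u act_id by auto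
            next
              case False
              then show ?thesis using Cons Some vn xn yn r zur by auto
            qed
          qed
        qed
      qed
    qed
  qed
qed

lemma foldr_nrm: "p \<in> lists (arr S) \<Longrightarrow> nrm w \<Longrightarrow> nrm (foldr act p w)"
  by (induction p) (auto intro: act_nrm)

lemma eq_foldr: "umon_eq S u v \<Longrightarrow> nrm w \<Longrightarrow> foldr act u w = foldr act v w"
proof (induction arbitrary: w rule: umon_eq.induct)
  case (rel_id e) then show ?case using act_id by simp
next
  case (rel_mult x y z) then show ?case using act_comp by simp
next
  case (sym u v) then show ?case by simp
next
  case (trans u v w') then show ?case by simp
next
  case (ctxt u v p q)
  have "nrm (foldr act q w)" using foldr_nrm ctxt by auto
  then show ?case using ctxt by simp
qed simp

lemma single_id: "umon_eq S [x] [] \<Longrightarrow> x \<in> ids S"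
proof (rule ccontr)
  assume h: "umon_eq S [x] []" and xn: "x \<notin> ids S"
  have "foldr act [x] [] = foldr act [] []" using eq_foldr[OF h, of "[]"] by simp
  then show False using xn by simp
qed

lemma R_equiv: "equiv (lists (arr S)) (umon_rel S)"
proof -
  have r: "refl_on (lists (arr S)) (umon_rel S)"
    unfolding refl_on_def umon_rel_def using eq_lists umon_eq.refl by blast
  have s: "sym (umon_rel S)"
    unfolding sym_def umon_rel_def using umon_eq.sym by blast
  have t: "trans (umon_rel S)"
    unfolding trans_def umon_rel_def using umon_eq.trans by blast
  have "umon_rel S \<subseteq> lists (arr S) \<times> lists (arr S)"
    unfolding umon_rel_def using eq_lists by blast
  then show ?thesis using r s t unfolding equiv_def by blast
qed

lemma R_mem: "(u, v) \<in> umon_rel S \<longleftrightarrow> umon_eq S u v"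
  unfolding umon_rel_def by simp

lemma cls_eq: "u \<in> lists (arr S) \<Longrightarrow> v \<in> lists (arr S) \<Longrightarrow>
   umon_rel S `` {u} = umon_rel S `` {v} \<longleftrightarrow> umon_eq S u v"
  by (simp add: eq_equiv_class_iff[OF R_equiv] R_mem)

lemma mult_cls:
  assumes a: "a \<in> lists (arr S)" and b: "b \<in> lists (arr S)"
  shows "mult (U_mon S) (umon_rel S `` {a}) (umon_rel S `` {b}) = umon_rel S `` {a @ b}"
proof -
  have "umon_rel S `` {a' @ b'} = umon_rel S `` {a @ b}"
    if "a' \<in> umon_rel S `` {a}" "b' \<in> umon_rel S `` {b}" for a' b'
  proof -
    have e1: "umon_eq S a a'" "umon_eq S b b'" using that by (simp_all add: R_mem)
    have "umon_eq S ([] @ a @ b) ([] @ a' @ b)" by (rule ctxt[OF e1(1)]) (use b in auto)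
    moreover have "umon_eq S (a' @ b @ []) (a' @ b' @ [])"
      by (rule ctxt[OF e1(2)]) (use eq_lists e1 in auto)
    ultimately have "umon_eq S (a @ b) (a' @ b')" using umon_eq.trans[of S "a @ b" "a' @ b"] by simp
    moreover have "a @ b \<in> lists (arr S)" "a' @ b' \<in> lists (arr S)" using eq_lists e1 a b by auto
    ultimately show ?thesis using cls_eq[of "a' @ b'" "a @ b"] umon_eq.sym by blast
  qed
  note eq = this
  have a0: "a \<in> umon_rel S `` {a}" using a R_mem umon_eq.refl[of a S] by simp
  have b0: "b \<in> umon_rel S `` {b}" using b R_mem umon_eq.refl[of b S] by simp
  have "mult (U_mon S) (umon_rel S `` {a}) (umon_rel S `` {b})
      = (\<Union>a' \<in> umon_rel S `` {a}. \<Union>b' \<in> umon_rel S `` {b}. umon_rel S `` {a' @ b'})"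
    by (simp add: U_mon_def)
  also have "\<dots> = (\<Union>a' \<in> umon_rel S `` {a}. \<Union>b' \<in> umon_rel S `` {b}. umon_rel S `` {a @ b})"
    by (rule SUP_cong[OF HOL.refl], rule SUP_cong[OF HOL.refl], rule eq)
  also have "\<dots> = umon_rel S `` {a @ b}" using a0 b0 by blast
  finally show ?thesis .
qed

lemma ids_inv: assumes cc: "conical_category S"
  shows "umon_eq S u v \<Longrightarrow> (set u \<subseteq> ids S \<longleftrightarrow> set v \<subseteq> ids S)"
proof (induction rule: umon_eq.induct)
  case (rel_mult x y z)
  show ?case
  proof
    assume "set [x, y] \<subseteq> ids S" then show "set [z] \<subseteq> ids S" using id_left[OF rel_mult.hyps] by auto
  next
    assume "set [z] \<subseteq> ids S"
    then have "x \<in> ids S" using rel_mult cc unfolding conical_category_def by auto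
    then show "set [x, y] \<subseteq> ids S" using id_left[OF rel_mult.hyps] \<open>set [z] \<subseteq> ids S\<close> by auto
  qed
qed auto

lemma ids_to_nil: "set u \<subseteq> ids S \<Longrightarrow> umon_eq S u []"
proof (induction u)
  case Nil show ?case by (rule umon_eq.refl) simp
next
  case (Cons e u)
  have "umon_eq S ([] @ [e] @ u) ([] @ [] @ u)"
    by (rule ctxt) (use Cons c_ids in \<open>auto intro: rel_id\<close>)
  moreover have "umon_eq S u []" using Cons by simp
  ultimately show ?case using umon_eq.trans[of S "e # u" u "[]"] by simp
qed

lemma carrier_U: "carrier (U_mon S) = lists (arr S) // umon_rel S"
  unfolding U_mon_def by simp
lemma one_U: "\<one>\<^bsub>U_mon S\<^esub> = umon_rel S `` {[]}"
  unfolding U_mon_def by simp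

theorem prop_main: "conical_category S \<longleftrightarrow> conical_monoid (U_mon S)"
proof
  assume cc: "conical_category S"
  show "conical_monoid (U_mon S)"
    unfolding conical_monoid_def
  proof (intro ballI impI)
    fix A B assume A: "A \<in> carrier (U_mon S)" and B: "B \<in> carrier (U_mon S)"
      and AB: "A \<otimes>\<^bsub>U_mon S\<^esub> B = \<one>\<^bsub>U_mon S\<^esub>"
    obtain a where a: "a \<in> lists (arr S)" "A = umon_rel S `` {a}"
      using A unfolding carrier_U quotient_def by blast
    obtain b where b: "b \<in> lists (arr S)" "B = umon_rel S `` {b}"
      using B unfolding carrier_U quotient_def by blast
    have "umon_rel S `` {a @ b} = umon_rel S `` {[]}"
      using AB mult_cls[OF a(1) b(1)] a b unfolding one_U by simp
    moreover have "a @ b \<in> lists (arr S)" using a b by simp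
    ultimately have "umon_eq S (a @ b) []" using cls_eq[of "a @ b" "[]"] by simp
    then have "set (a @ b) \<subseteq> ids S" using ids_inv[OF cc, of "a @ b" "[]"] by simp
    then have "umon_eq S a []" "umon_eq S b []" using ids_to_nil by auto
    then show "A = \<one>\<^bsub>U_mon S\<^esub> \<and> B = \<one>\<^bsub>U_mon S\<^esub>"
      using cls_eq[OF a(1), of "[]"] cls_eq[OF b(1), of "[]"] a b unfolding one_U by simp
  qed
next
  assume cm: "conical_monoid (U_mon S)"
  show "conical_category S"
    unfolding conical_category_def
  proof (intro allI impI)
    fix x y z assume h: "cmp S x y = Some z" and zi: "z \<in> ids S"
    have x: "x \<in> arr S" and y: "y \<in> arr S" using c_arr h by auto
    have A: "umon_rel S `` {[x]} \<in> carrier (U_mon S)"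
      using x unfolding carrier_U by (auto intro: quotientI)
    have B: "umon_rel S `` {[y]} \<in> carrier (U_mon S)"
      using y unfolding carrier_U by (auto intro: quotientI)
    have "umon_eq S [x, y] []" using umon_eq.trans[OF rel_mult[OF h] rel_id[OF zi]] .
    moreover have "[x] @ [y] \<in> lists (arr S)" using x y by simp
    ultimately have "umon_rel S `` {[x] @ [y]} = umon_rel S `` {[]}" using cls_eq[of "[x] @ [y]" "[]"] by simp
    then have "umon_rel S `` {[x]} \<otimes>\<^bsub>U_mon S\<^esub> umon_rel S `` {[y]} = \<one>\<^bsub>U_mon S\<^esub>"
      using mult_cls[of "[x]" "[y]"] x y unfolding one_U by simp
    then have "umon_rel S `` {[x]} = \<one>\<^bsub>U_mon S\<^esub>"
      using cm A B unfolding conical_monoid_def by blast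
    then have "umon_eq S [x] []" using cls_eq[of "[x]" "[]"] x unfolding one_U by simp
    then show "x \<in> ids S" using single_id by blast
  qed
qed

end

theorem proposition4p1:
  fixes S :: "('a, 'b) category_scheme"
  assumes "is_category S"
  shows "conical_category S \<longleftrightarrow> conical_monoid (U_mon S)"
  using prop_main[OF assms] .

end
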